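(* Let $x \geq 1$ and $m \geq 2$ be integers. Let $\mathcal{C}_{m,x}$ be the set of binary words of length $m$ containing no pattern from $\mathcal{T}_x = \{0\mathbf{1}^y0,\ 1\mathbf{0}^y1 : 1\le y\le x\}$ as a contiguous substring, listed in increasing lexicographic order, and for $\mathbf{c} = [c_{m-1}\, c_{m-2} \dots c_0] \in \mathcal{C}_{m,x}$ (with $c_{m-1}$ the leftmost bit) let $g(\mathbf{c}) \in \{0,\dots,|\mathcal{C}_{m,x}|-1\}$ be its position in this list. Let $N(k,x) = |\mathcal{C}_{k,x}|$ for $k\ge 1$ and $N(k,x) \triangleq 2$ for all integers $k \le 1$. Then: if $c_{m-1}=0$, $$g(\mathbf{c}) = \frac12 \sum_{\substack{0\le i\le m-2\\ c_i=1}} N(i-x+1,x);$$ if $c_{m-1}=1$, $$g(\mathbf{c}) = \frac12\Big[N(m,x) + \sum_{\substack{0\le i\le m-2\\ c_i=1}} N(i-x+1,x)\Big].$$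
   Context: $\mathbf{0}^r$ (resp. $\mathbf{1}^r$) denotes a run of $r$ consecutive $0$'s (resp. $1$'s). Lexicographic order on binary words of a fixed length is the order as binary numbers with the leftmost bit most significant; positions are counted from $0$. *)

theory Defs
  imports Complex_Main "HOL-Library.Sublist"
begin

text \<open>Binary words are bool lists written left to right (head = leftmost bit,
  True = 1). For a word w of length m, the paper's bit c_i is w ! (m - 1 - i).\<close>

definition forbidden :: "nat \<Rightarrow> bool list set" where
  "forbidden x = {[False] @ replicate y True @ [False] | y. 1 \<le> y \<and> y \<le> x}
               \<union> {[True] @ replicate y False @ [True] | y. 1 \<le> y \<and> y \<le> x}"

definition codewords :: "nat \<Rightarrow> nat \<Rightarrow> bool list set" where
  "codewords m x = {w. length w = m \<and> (\<forall>p\<in>forbidden x. \<not> sublist p w)}"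

definition bval :: "bool list \<Rightarrow> nat" where
  "bval w = foldl (\<lambda>a b. 2 * a + (if b then 1 else 0)) 0 w"

text \<open>Position (from 0) of w in the lexicographically ordered list of codewords.\<close>
definition gpos :: "nat \<Rightarrow> nat \<Rightarrow> bool list \<Rightarrow> nat" where
  "gpos m x w = card {d \<in> codewords m x. bval d < bval w}"

definition Ncount :: "int \<Rightarrow> nat \<Rightarrow> nat" where
  "Ncount k x = (if k \<le> 1 then 2 else card (codewords (nat k) x))"

end

theory Submission
  imports Defs
begin

definition short :: "nat \<Rightarrow> bool \<Rightarrow> bool list \<Rightarrow> bool" where
  "short x b d = (\<exists>y. 1 \<le> y \<and> y \<le> x \<and> y < length d \<and> (\<forall>j<y. d ! j = (\<not> b)) \<and> d ! y = b)"

lemma bval_foldl: "foldl (\<lambda>a b. 2 * a + (if b then 1 else 0)) a d = a * 2 ^ length d + bval d"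
proof (induction d arbitrary: a)
  case Nil
  then show ?case by (simp add: bval_def)
next
  case (Cons c d)
  have "bval (c # d) = (if c then 1 else 0) * 2 ^ length d + bval d"
    unfolding bval_def using Cons[of "(if c then 1 else 0)"] by (simp add: bval_def)
  then show ?case using Cons[of "2 * a + (if c then 1 else 0)"]
    by (simp add: algebra_simps)
qed

lemma bval_Cons: "bval (c # d) = (if c then 2 ^ length d else 0) + bval d"
  using bval_foldl[of "(if c then 1 else 0)" d] by (simp add: bval_def)

lemma bval_Nil[simp]: "bval [] = 0" by (simp add: bval_def)

lemma bval_less: "bval d < 2 ^ length d"
  by (induction d) (auto simp: bval_Cons)

lemma lex_less:
  assumes "length d = length u" "k < length u" "\<forall>j<k. d ! j = u ! j" "\<not> d ! k" "u ! k"
  shows "bval d < bval u"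
  using assms
proof (induction k arbitrary: d u)
  case 0
  then obtain a d' where d: "d = a # d'" by (cases d) auto
  from 0 obtain c u' where u: "u = c # u'" by (cases u) auto
  show ?case using 0 d u bval_less[of d'] by (simp add: bval_Cons)
next
  case (Suc k)
  then obtain a d' where d: "d = a # d'" by (cases d) auto
  from Suc obtain c u' where u: "u = c # u'" by (cases u) auto
  have ac: "a = c" using Suc.prems(3) d u by force
  have "bval d' < bval u'"
    using Suc.IH[of d' u'] Suc.prems d u by force
  then show ?case using d u ac Suc.prems(1) by (simp add: bval_Cons)
qed

lemma hd_less:
  assumes "length d = length u" "d \<noteq> []" "\<not> hd d" "hd u"
  shows "bval d < bval u"
  using lex_less[of d u 0] assms by (cases d; cases u) auto

lemma prefix_rep_iff:
  "prefix (replicate y a @ [b]) d \<longleftrightarrow> y < length d \<and> (\<forall>j<y. d ! j = a) \<and> d ! y = b"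
proof (induction y arbitrary: d)
  case 0
  then show ?case by (cases d) auto
next
  case (Suc y)
  show ?case
  proof (cases d)
    case Nil
    then show ?thesis by simp
  next
    case (Cons c d')
    have "(\<forall>j<Suc y. d ! j = a) \<longleftrightarrow> c = a \<and> (\<forall>j<y. d' ! j = a)"
      using Cons by (auto simp: less_Suc_eq_0_disj)
    then show ?thesis using Suc[of d'] Cons by auto
  qed
qed

lemma forbidden_iff:
  "p \<in> forbidden x \<longleftrightarrow> (\<exists>y c. 1 \<le> y \<and> y \<le> x \<and> p = c # replicate y (\<not> c) @ [c])"
  unfolding forbidden_def by auto (metis (full_types))+

lemma cons_cw:
  "(b # d \<in> codewords (Suc n) x) \<longleftrightarrow> d \<in> codewords n x \<and> \<not> short x b d"
proof -
  have pre: "(\<exists>p\<in>forbidden x. prefix p (b # d)) \<longleftrightarrow> short x b d"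
  proof
    assume "\<exists>p\<in>forbidden x. prefix p (b # d)"
    then obtain p where p: "p \<in> forbidden x" "prefix p (b # d)" by blast
    then obtain y c where y: "1 \<le> y" "y \<le> x" and pr: "prefix (c # replicate y (\<not> c) @ [c]) (b # d)"
      using forbidden_iff[of p x] by blast
    then have "c = b" "prefix (replicate y (\<not> b) @ [b]) d" by auto
    then show "short x b d" unfolding short_def using y prefix_rep_iff[of y "\<not> b" b d] by blast
  next
    assume "short x b d"
    then obtain y where y: "1 \<le> y" "y \<le> x" and "y < length d \<and> (\<forall>j<y. d ! j = (\<not> b)) \<and> d ! y = b"
      unfolding short_def by blast
    then have "prefix (replicate y (\<not> b) @ [b]) d" using prefix_rep_iff[of y "\<not> b" b d] by blast
    then have "prefix (b # replicate y (\<not> b) @ [b]) (b # d)" by simp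
    moreover have "b # replicate y (\<not> b) @ [b] \<in> forbidden x" unfolding forbidden_iff using y by blast
    ultimately show "\<exists>p\<in>forbidden x. prefix p (b # d)" by blast
  qed
  show ?thesis unfolding codewords_def
    using pre by (auto simp: sublist_Cons_right)
qed

lemma finite_cw: "finite (codewords n x)"
proof -
  have "codewords n x \<subseteq> {w. set w \<subseteq> (UNIV::bool set) \<and> length w = n}"
    unfolding codewords_def by auto
  moreover have "finite {w. set w \<subseteq> (UNIV::bool set) \<and> length w = n}"
    by (rule finite_lists_length_eq) simp
  ultimately show ?thesis by (rule finite_subset)
qed

lemma cw_length: "d \<in> codewords n x \<Longrightarrow> length d = n"
  unfolding codewords_def by simp

lemma forbidden_map_Not: "p \<in> forbidden x \<Longrightarrow> map Not p \<in> forbidden x"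
  unfolding forbidden_iff by force

lemma cw_map_Not:
  assumes "d \<in> codewords n x" shows "map Not d \<in> codewords n x"
  unfolding codewords_def
proof (intro CollectI conjI ballI)
  show "length (map Not d) = n" using assms by (simp add: cw_length)
  fix p assume p: "p \<in> forbidden x"
  show "\<not> sublist p (map Not d)"
  proof
    assume "sublist p (map Not d)"
    then have "sublist (map Not p) (map Not (map Not d))" by (rule map_mono_sublist)
    then have "sublist (map Not p) d" by (simp add: comp_def)
    moreover have "map Not p \<in> forbidden x" using p by (rule forbidden_map_Not)
    ultimately show False using assms unfolding codewords_def by blast
  qed
qed

lemma card_hd_sym:
  assumes "n \<ge> 1"
  shows "card {d \<in> codewords n x. hd d = c} = card {d \<in> codewords n x. hd d = (\<not> c)}"
proof -
  have inj: "inj_on (map Not) A" for A :: "bool list set"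
  proof -
    have "inj (Not :: bool \<Rightarrow> bool)" by (simp add: inj_def)
    then have "inj (map Not :: bool list \<Rightarrow> bool list)" by simp
    then show ?thesis by (rule inj_on_subset) simp
  qed
  have ne: "d \<in> codewords n x \<Longrightarrow> d \<noteq> []" for d using assms cw_length[of d n x] by auto
  have "map Not ` {d \<in> codewords n x. hd d = c} = {d \<in> codewords n x. hd d = (\<not> c)}"
  proof (intro equalityI subsetI)
    fix e assume "e \<in> map Not ` {d \<in> codewords n x. hd d = c}"
    then obtain d where d: "d \<in> codewords n x" "hd d = c" "e = map Not d" by blast
    then show "e \<in> {d \<in> codewords n x. hd d = (\<not> c)}"
      using cw_map_Not[OF d(1)] ne[OF d(1)] by (auto simp: hd_map)
  next
    fix e assume e: "e \<in> {d \<in> codewords n x. hd d = (\<not> c)}"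
    then have "map Not e \<in> {d \<in> codewords n x. hd d = c}"
      using cw_map_Not[of e n x] ne[of e] by (auto simp: hd_map)
    moreover have "e = map Not (map Not e)" by (simp add: comp_def)
    ultimately show "e \<in> map Not ` {d \<in> codewords n x. hd d = c}" by blast
  qed
  then show ?thesis using card_image[OF inj, of "{d \<in> codewords n x. hd d = c}"] by simp
qed

lemma card_cw_split:
  assumes "n \<ge> 1"
  shows "card (codewords n x) = 2 * card {d \<in> codewords n x. hd d = c}"
proof -
  have "codewords n x = {d \<in> codewords n x. hd d = c} \<union> {d \<in> codewords n x. hd d = (\<not> c)}"
    by auto
  then have "card (codewords n x) = card {d \<in> codewords n x. hd d = c} + card {d \<in> codewords n x. hd d = (\<not> c)}"
    using finite_cw[of n x] card_Un_disjoint[of "{d \<in> codewords n x. hd d = c}" "{d \<in> codewords n x. hd d = (\<not> c)}"]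
    by auto
  then show ?thesis using card_hd_sym[OF assms, of x c] by simp
qed

lemma not_short_same: "d \<noteq> [] \<Longrightarrow> hd d = b \<Longrightarrow> \<not> short x b d"
  unfolding short_def by (auto simp: hd_conv_nth)

lemma rep_cw:
  assumes "e \<in> codewords k x" "e \<noteq> []" "hd e = c"
  shows "replicate j c @ e \<in> codewords (j + k) x"
proof (induction j)
  case 0
  then show ?case using assms by simp
next
  case (Suc j)
  have "replicate j c @ e \<noteq> []" "hd (replicate j c @ e) = c" using assms by (cases j; simp)+
  then show ?case using Suc cons_cw not_short_same by simp
qed

lemma replicate_cw: "replicate n c \<in> codewords n x"
  unfolding codewords_def
proof (intro CollectI conjI ballI)
  fix p assume "p \<in> forbidden x"
  then obtain y c' where "1 \<le> y" "p = c' # replicate y (\<not> c') @ [c']" using forbidden_iff by blast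
  then have "{True, False} \<subseteq> set p" by (cases y) auto
  then show "\<not> sublist p (replicate n c)"
    using set_mono_sublist[of p "replicate n c"] by (cases "n = 0") auto
qed simp

lemma card_cw1: "card (codewords 1 x) = 2"
proof -
  have "codewords 1 x = {[True], [False]}"
  proof (intro equalityI subsetI)
    fix d assume "d \<in> codewords 1 x"
    then have "length d = 1" by (rule cw_length)
    then obtain a where "d = [a]" by (metis One_nat_def length_0_conv length_Suc_conv)
    then show "d \<in> {[True], [False]}" by (cases a) auto
  next
    fix d assume "d \<in> {[True], [False]}"
    then show "d \<in> codewords 1 x" using replicate_cw[of 1 True x] replicate_cw[of 1 False x] by auto
  qed
  then show ?thesis by simp
qed

lemma allrun:
  assumes "d \<noteq> []" "hd d = (\<not> b)" "\<not> short x b d"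
  shows "j \<le> x \<Longrightarrow> j < length d \<Longrightarrow> \<forall>i\<le>j. d ! i = (\<not> b)"
proof (induction j)
  case 0
  then show ?case using assms by (simp add: hd_conv_nth)
next
  case (Suc j)
  then have ih: "\<forall>i\<le>j. d ! i = (\<not> b)" by simp
  have "d ! Suc j = (\<not> b)"
  proof (rule ccontr)
    assume "d ! Suc j \<noteq> (\<not> b)"
    then have "short x b d" unfolding short_def using ih Suc.prems
      by (intro exI[of _ "Suc j"]) (auto simp: less_Suc_eq_le)
    then show False using assms by simp
  qed
  then show ?case using ih le_Suc_eq by auto
qed

lemma cw_ne: "d \<in> codewords n x \<Longrightarrow> n \<ge> 1 \<Longrightarrow> d \<noteq> []"
  using cw_length by fastforce

lemma F_card:
  assumes x1: "x \<ge> 1" and n1: "n \<ge> 1"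
  shows "2 * card {d \<in> codewords n x. hd d = (\<not> b) \<and> \<not> short x b d} = Ncount (int n - int x) x"
proof (cases "n \<le> x")
  case True
  have "{d \<in> codewords n x. hd d = (\<not> b) \<and> \<not> short x b d} = {replicate n (\<not> b)}"
  proof (intro equalityI subsetI)
    fix d assume d: "d \<in> {d \<in> codewords n x. hd d = (\<not> b) \<and> \<not> short x b d}"
    then have len: "length d = n" using cw_length by blast
    have ne: "d \<noteq> []" using d cw_ne n1 by blast
    have "\<forall>i\<le>n-1. d ! i = (\<not> b)" using allrun[OF ne, of b x "n - 1"] d len True n1 by auto
    then have "d = replicate n (\<not> b)" using len n1
      by (intro nth_equalityI) auto
    then show "d \<in> {replicate n (\<not> b)}" by simp
  next
    fix d assume "d \<in> {replicate n (\<not> b)}"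
    then have d: "d = replicate n (\<not> b)" by simp
    have "\<not> short x b d" unfolding short_def d by auto
    moreover have "hd d = (\<not> b)" using d n1 by (cases n) auto
    ultimately show "d \<in> {d \<in> codewords n x. hd d = (\<not> b) \<and> \<not> short x b d}"
      using replicate_cw d by blast
  qed
  moreover have "Ncount (int n - int x) x = 2" unfolding Ncount_def using True by simp
  ultimately show ?thesis by simp
next
  case False
  define k where "k = n - x"
  have k1: "k \<ge> 1" and nk: "n = x + k" using False k_def by auto
  have eq: "{d \<in> codewords n x. hd d = (\<not> b) \<and> \<not> short x b d}
      = (\<lambda>e. replicate x (\<not> b) @ e) ` {e \<in> codewords k x. hd e = (\<not> b)}"
  proof (intro equalityI subsetI)
    fix d assume d: "d \<in> {d \<in> codewords n x. hd d = (\<not> b) \<and> \<not> short x b d}"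
    then have len: "length d = n" using cw_length by blast
    have ne: "d \<noteq> []" using d cw_ne n1 by blast
    have run: "\<forall>i\<le>x. d ! i = (\<not> b)" using allrun[OF ne, of b x x] d len False by auto
    have tk: "take x d = replicate x (\<not> b)" using run len False
      by (intro nth_equalityI) auto
    define e where "e = drop x d"
    have de: "d = replicate x (\<not> b) @ e" using tk e_def by (metis append_take_drop_id)
    have hde: "hd e = (\<not> b)" using run len False e_def by (simp add: hd_drop_conv_nth)
    have sub: "sublist e d" using de by simp
    have "e \<in> codewords k x"
      using d sub len unfolding codewords_def e_def k_def
      by (auto intro: sublist_order.order_trans)
    then show "d \<in> (\<lambda>e. replicate x (\<not> b) @ e) ` {e \<in> codewords k x. hd e = (\<not> b)}"
      using de hde by blast
  next
    fix d assume "d \<in> (\<lambda>e. replicate x (\<not> b) @ e) ` {e \<in> codewords k x. hd e = (\<not> b)}"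
    then obtain e where e: "e \<in> codewords k x" "hd e = (\<not> b)" and de: "d = replicate x (\<not> b) @ e"
      by blast
    have ne: "e \<noteq> []" using e cw_ne k1 by blast
    have dcw: "d \<in> codewords n x" using rep_cw[OF e(1) ne e(2), of x] de nk by simp
    have hd: "hd d = (\<not> b)" using de x1 by (cases x) auto
    have "\<not> short x b d"
    proof
      assume "short x b d"
      then obtain y where y: "y \<le> x" "y < length d" "d ! y = b" unfolding short_def by blast
      show False
      proof (cases "y < x")
        case True then show False using y de by (simp add: nth_append)
      next
        case False
        then have "y = x" using y by simp
        then show False using y de e(2) ne by (simp add: nth_append hd_conv_nth)
      qed
    qed
    then show "d \<in> {d \<in> codewords n x. hd d = (\<not> b) \<and> \<not> short x b d}" using dcw hd by blast
  qed
  have inj: "inj_on (\<lambda>e. replicate x (\<not> b) @ e) A" for A by (rule inj_onI) simp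
  have c1: "card {d \<in> codewords n x. hd d = (\<not> b) \<and> \<not> short x b d} = card {e \<in> codewords k x. hd e = (\<not> b)}"
    unfolding eq by (rule card_image[OF inj])
  have c2: "2 * card {e \<in> codewords k x. hd e = (\<not> b)} = card (codewords k x)"
    using card_cw_split[OF k1, of x "\<not> b"] by simp
  have "Ncount (int n - int x) x = card (codewords k x)"
  proof (cases "k = 1")
    case True then show ?thesis unfolding Ncount_def using nk card_cw1 by simp
  next
    case False then show ?thesis unfolding Ncount_def using nk k1 by simp
  qed
  then show ?thesis using c1 c2 by simp
qed

definition Rk :: "nat \<Rightarrow> bool list \<Rightarrow> nat" where
  "Rk x w = card {d \<in> codewords (length w) x. hd d = hd w \<and> bval d < bval w}"

lemma Rk_Cons:
  assumes "b # u \<in> codewords (Suc n) x"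
  shows "Rk x (b # u) = card {d \<in> codewords n x. \<not> short x b d \<and> bval d < bval u}"
proof -
  have len: "length u = n" using assms cw_length by fastforce
  have "{d \<in> codewords (length (b # u)) x. hd d = hd (b # u) \<and> bval d < bval (b # u)}
     = Cons b ` {d \<in> codewords n x. \<not> short x b d \<and> bval d < bval u}"
  proof (intro equalityI subsetI)
    fix d assume d: "d \<in> {d \<in> codewords (length (b # u)) x. hd d = hd (b # u) \<and> bval d < bval (b # u)}"
    then have "length d = Suc n" using len cw_length by fastforce
    then obtain a d' where dd: "d = a # d'" by (cases d) auto
    then have ab: "a = b" using d by simp
    have dl: "length d' = n" using \<open>length d = Suc n\<close> dd by simp
    have "d' \<in> {d \<in> codewords n x. \<not> short x b d \<and> bval d < bval u}"
      using d dd ab dl len cons_cw[of b d' n x] by (auto simp: bval_Cons)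
    then show "d \<in> Cons b ` {d \<in> codewords n x. \<not> short x b d \<and> bval d < bval u}"
      using dd ab by blast
  next
    fix d assume "d \<in> Cons b ` {d \<in> codewords n x. \<not> short x b d \<and> bval d < bval u}"
    then obtain d' where d': "d' \<in> codewords n x" "\<not> short x b d'" "bval d' < bval u" "d = b # d'"
      by blast
    then show "d \<in> {d \<in> codewords (length (b # u)) x. hd d = hd (b # u) \<and> bval d < bval (b # u)}"
      using len cons_cw[of b d' n x] cw_length[OF d'(1)] by (auto simp: bval_Cons)
  qed
  then show ?thesis unfolding Rk_def by (simp add: card_image)
qed

lemma R_step:
  assumes w: "b # u \<in> codewords (Suc n) x" and ne: "u \<noteq> []"
  shows "Rk x (b # u) = Rk x u + (if hd u then card {d \<in> codewords n x. hd d = (\<not> b) \<and> \<not> short x b d} else 0)"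
proof -
  have len: "length u = n" using w cw_length by fastforce
  have n1: "n \<ge> 1" using ne len by (cases u) auto
  have ucw: "u \<in> codewords n x" and nsu: "\<not> short x b u" using w cons_cw by auto
  define c where "c = hd u"
  define S where "S = {d \<in> codewords n x. \<not> short x b d \<and> bval d < bval u}"
  define L where "L = {d \<in> codewords n x. hd d = c \<and> bval d < bval u}"
  define F where "F = {d \<in> codewords n x. hd d = (\<not> b) \<and> \<not> short x b d}"
  have RS: "Rk x (b # u) = card S" unfolding S_def using Rk_Cons[OF w] .
  have RL: "Rk x u = card L" unfolding L_def Rk_def c_def len ..
  have fin: "finite A" if "A \<subseteq> codewords n x" for A using finite_cw[of n x] that finite_subset by blast
  have dne: "d \<in> codewords n x \<Longrightarrow> d \<noteq> []" for d using cw_ne n1 by blast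
  have dlen: "d \<in> codewords n x \<Longrightarrow> length d = n" for d using cw_length by blast
  have hdl1: "d \<in> codewords n x \<Longrightarrow> \<not> hd d \<Longrightarrow> hd u \<Longrightarrow> bval d < bval u" for d
    using hd_less[of d u] dne dlen len by auto
  have hdl2: "d \<in> codewords n x \<Longrightarrow> hd d \<Longrightarrow> \<not> hd u \<Longrightarrow> bval u < bval d" for d
    using hd_less[of u d] dne dlen len ne by auto
  show ?thesis
  proof (cases "b = c")
    case bc: True
    show ?thesis
    proof (cases c)
      case False
      have "S = L"
      proof (intro equalityI subsetI)
        fix d assume d: "d \<in> S"
        then have "hd d = c" using hdl2[of d] False c_def unfolding S_def by fastforce
        then show "d \<in> L" using d unfolding S_def L_def by blast
      next
        fix d assume d: "d \<in> L"
        then show "d \<in> S" using not_short_same[of d b x] dne bc unfolding S_def L_def by auto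
      qed
      then show ?thesis using RS RL False c_def by simp
    next
      case True
      have "S = L \<union> F"
      proof (intro equalityI subsetI)
        fix d assume d: "d \<in> S"
        then show "d \<in> L \<union> F" unfolding S_def L_def F_def using bc True by auto
      next
        fix d assume d: "d \<in> L \<union> F"
        then show "d \<in> S" unfolding S_def L_def F_def
          using not_short_same[of d b x] dne[of d] bc True hdl1[of d] c_def by auto
      qed
      moreover have "L \<inter> F = {}" unfolding L_def F_def using bc by auto
      moreover have "finite L" "finite F" unfolding L_def F_def by (auto intro: fin)
      ultimately have "card S = card L + card F" by (simp add: card_Un_disjoint)
      then show ?thesis using RS RL True c_def F_def by simp
    qed
  next
    case bc: False
    show ?thesis
    proof (cases c)
      case False
      then have b: "b" using bc by simp
      have hu: "hd u = (\<not> b)" using b False c_def by simp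
      have urun: "\<forall>i\<le>j. u ! i = (\<not> b)" if "j \<le> x" "j < n" for j
        using allrun[OF ne hu nsu] that len by blast
      have "S = L"
      proof (intro equalityI subsetI)
        fix d assume d: "d \<in> S"
        then have "hd d = c" using hdl2[of d] False c_def unfolding S_def by fastforce
        then show "d \<in> L" using d unfolding S_def L_def by blast
      next
        fix d assume d: "d \<in> L"
        have "\<not> short x b d"
        proof
          assume "short x b d"
          then obtain y where y: "y \<le> x" "y < length d" "\<forall>j<y. d ! j = (\<not> b)" "d ! y = b"
            unfolding short_def by blast
          have yn: "y < n" using y d dlen unfolding L_def by auto
          have "bval u < bval d"
            using lex_less[of u d y] y urun[OF y(1) yn] yn len d dlen b unfolding L_def by auto
          then show False using d unfolding L_def by simp
        qed
        then show "d \<in> S" using d unfolding S_def L_def by blast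
      qed
      then show ?thesis using RS RL False c_def by simp
    next
      case True
      then have b: "\<not> b" using bc by simp
      have hu: "hd u = (\<not> b)" using b True c_def by simp
      have urun: "\<forall>i\<le>j. u ! i = (\<not> b)" if "j \<le> x" "j < n" for j
        using allrun[OF ne hu nsu] that len by blast
      define PF where "PF = {d \<in> codewords n x. hd d = False}"
      define PT where "PT = {d \<in> codewords n x. hd d = True}"
      define X where "X = {d \<in> codewords n x. hd d = True \<and> \<not> short x b d \<and> bval d < bval u}"
      define Y where "Y = {d \<in> codewords n x. hd d = True \<and> short x b d}"
      have Yl: "bval d < bval u" if d: "d \<in> Y" for d
      proof -
        obtain y where y: "y \<le> x" "y < length d" "\<forall>j<y. d ! j = (\<not> b)" "d ! y = b"
          using d unfolding Y_def short_def by blast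
        have yn: "y < n" using y d dlen unfolding Y_def by auto
        show ?thesis
          using lex_less[of d u y] y urun[OF y(1) yn] yn len d dlen b unfolding Y_def by auto
      qed
      have S_eq: "S = PF \<union> X"
      proof (intro equalityI subsetI)
        fix d assume "d \<in> S" then show "d \<in> PF \<union> X" unfolding S_def PF_def X_def by auto
      next
        fix d assume "d \<in> PF \<union> X"
        then show "d \<in> S" unfolding S_def PF_def X_def
          using not_short_same[of d b x] dne[of d] b hdl1[of d] True c_def by auto
      qed
      have L_eq: "L = X \<union> Y"
      proof (intro equalityI subsetI)
        fix d assume "d \<in> L" then show "d \<in> X \<union> Y" unfolding L_def X_def Y_def using True by auto
      next
        fix d assume "d \<in> X \<union> Y"
        then show "d \<in> L" unfolding L_def X_def Y_def using Yl[of d] True unfolding Y_def by auto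
      qed
      have PT_eq: "PT = F \<union> Y" unfolding PT_def F_def Y_def using b by auto
      have finX: "finite X" "finite Y" "finite PF" "finite F"
        unfolding X_def Y_def PF_def F_def by (auto intro: fin)
      have "card S = card PF + card X"
        unfolding S_eq using finX by (intro card_Un_disjoint) (auto simp: PF_def X_def)
      moreover have "card L = card X + card Y"
        unfolding L_eq using finX by (intro card_Un_disjoint) (auto simp: X_def Y_def)
      moreover have "card PT = card F + card Y"
        unfolding PT_eq using finX by (intro card_Un_disjoint) (auto simp: F_def Y_def)
      moreover have "card PF = card PT"
        unfolding PF_def PT_def using card_hd_sym[OF n1, of x False] by simp
      ultimately show ?thesis using RS RL True c_def F_def by simp
    qed
  qed
qed

fun Tn :: "nat \<Rightarrow> bool list \<Rightarrow> nat" where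
  "Tn x [] = 0"
| "Tn x (c # v) = (if c then Ncount (int (length v) + 1 - int x) x else 0) + Tn x v"

lemma R_formula:
  assumes "x \<ge> 1"
  shows "b # u \<in> codewords (Suc (length u)) x \<Longrightarrow> 2 * Rk x (b # u) = Tn x u"
proof (induction u arbitrary: b)
  case Nil
  have E: "{d \<in> codewords (length [b]) x. hd d = hd [b] \<and> bval d < bval [b]} = {}"
  proof (intro equalityI subsetI)
    fix d assume d: "d \<in> {d \<in> codewords (length [b]) x. hd d = hd [b] \<and> bval d < bval [b]}"
    then have "length d = 1" using cw_length by fastforce
    then obtain a where "d = [a]" by (metis One_nat_def length_0_conv length_Suc_conv)
    then show "d \<in> {}" using d by auto
  qed simp
  show ?case unfolding Rk_def E by simp
next
  case (Cons c v)
  have cv: "c # v \<in> codewords (Suc (length v)) x" using Cons.prems cons_cw by simp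
  have ih: "2 * Rk x (c # v) = Tn x v" using Cons.IH[OF cv] .
  have st: "Rk x (b # c # v) = Rk x (c # v) + (if c then card {d \<in> codewords (Suc (length v)) x. hd d = (\<not> b) \<and> \<not> short x b d} else 0)"
    using R_step[of b "c # v" "Suc (length v)" x] Cons.prems by simp
  have f: "2 * card {d \<in> codewords (Suc (length v)) x. hd d = (\<not> b) \<and> \<not> short x b d} = Ncount (int (length v) + 1 - int x) x"
    using F_card[OF assms, of "Suc (length v)" b] by (simp add: add.commute)
  show ?case using st f ih by simp
qed

lemma Tn_sum: "Tn x u = (\<Sum>i\<in>{i. i < length u \<and> u ! (length u - 1 - i)}. Ncount (int i - int x + 1) x)"
proof (induction u)
  case Nil
  then show ?case by simp
next
  case (Cons c v)
  define A where "A = {i. i < length v \<and> v ! (length v - 1 - i)}"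
  have finA: "finite A" unfolding A_def by simp
  have eq: "{i. i < length (c # v) \<and> (c # v) ! (length (c # v) - 1 - i)} = (if c then insert (length v) A else A)"
  proof (intro equalityI subsetI)
    fix i assume i: "i \<in> {i. i < length (c # v) \<and> (c # v) ! (length (c # v) - 1 - i)}"
    show "i \<in> (if c then insert (length v) A else A)"
    proof (cases "i = length v")
      case True then show ?thesis using i by simp
    next
      case False
      then have "i < length v" using i by simp
      moreover then have "length v - i = Suc (length v - 1 - i)" by simp
      ultimately show ?thesis using i unfolding A_def by auto
    qed
  next
    fix i assume i: "i \<in> (if c then insert (length v) A else A)"
    show "i \<in> {i. i < length (c # v) \<and> (c # v) ! (length (c # v) - 1 - i)}"
    proof (cases "i = length v")
      case True then show ?thesis using i unfolding A_def by (cases c) auto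
    next
      case False
      then have iA: "i \<in> A" using i by (cases c) auto
      then have "i < length v" unfolding A_def by simp
      moreover then have "length v - i = Suc (length v - 1 - i)" by simp
      ultimately show ?thesis using iA unfolding A_def by auto
    qed
  qed
  have nA: "length v \<notin> A" unfolding A_def by simp
  show ?case unfolding eq using Cons.IH finA nA unfolding A_def[symmetric]
    by (auto simp: algebra_simps)
qed

theorem theorem2:
  fixes m x :: nat and w :: "bool list"
  assumes "x \<ge> 1" and "m \<ge> 2" and "w \<in> codewords m x"
  shows "(\<not> w ! 0 \<longrightarrow>
            real (gpos m x w) =
              (1/2) * (\<Sum>i\<in>{i. i \<le> m - 2 \<and> w ! (m - 1 - i)}.
                         real (Ncount (int i - int x + 1) x)))
       \<and> (w ! 0 \<longrightarrow>
            real (gpos m x w) =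
              (1/2) * (real (Ncount (int m) x) +
                       (\<Sum>i\<in>{i. i \<le> m - 2 \<and> w ! (m - 1 - i)}.
                         real (Ncount (int i - int x + 1) x))))"
proof -
  have lw: "length w = m" using assms(3) cw_length by blast
  then obtain b u where w: "w = b # u" using assms(2) by (cases w) auto
  have lu: "length u = m - 1" using lw w by simp
  have une: "u \<noteq> []" using lu assms(2) by auto
  have wcw: "b # u \<in> codewords (Suc (length u)) x" using assms(3) w lu assms(2) by simp
  have R: "2 * Rk x w = Tn x u" using R_formula[OF assms(1) wcw] w by simp
  have I: "{i. i \<le> m - 2 \<and> w ! (m - 1 - i)} = {i. i < length u \<and> u ! (length u - 1 - i)}"
  proof (intro equalityI subsetI)
    fix i assume i: "i \<in> {i. i \<le> m - 2 \<and> w ! (m - 1 - i)}"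
    then have "i < length u" "m - 1 - i = Suc (length u - 1 - i)" using lu assms(2) by auto
    then show "i \<in> {i. i < length u \<and> u ! (length u - 1 - i)}" using i w by auto
  next
    fix i assume i: "i \<in> {i. i < length u \<and> u ! (length u - 1 - i)}"
    then have "i \<le> m - 2" "m - 1 - i = Suc (length u - 1 - i)" using lu assms(2) by auto
    then show "i \<in> {i. i \<le> m - 2 \<and> w ! (m - 1 - i)}" using i w by auto
  qed
  have sumeq: "(\<Sum>i\<in>{i. i \<le> m - 2 \<and> w ! (m - 1 - i)}. real (Ncount (int i - int x + 1) x)) = real (Tn x u)"
    unfolding I Tn_sum by (simp add: of_nat_sum)
  define RS where "RS = {d \<in> codewords m x. hd d = b \<and> bval d < bval w}"
  have RkS: "Rk x w = card RS" unfolding Rk_def RS_def lw using w by simp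
  have m1: "m \<ge> 1" using assms(2) by simp
  have dne: "d \<in> codewords m x \<Longrightarrow> d \<noteq> []" for d using cw_ne m1 by blast
  have dlen: "d \<in> codewords m x \<Longrightarrow> length d = m" for d using cw_length by blast
  have G: "gpos m x w = card {d \<in> codewords m x. bval d < bval w}" unfolding gpos_def ..
  show ?thesis
  proof (cases b)
    case False
    have "{d \<in> codewords m x. bval d < bval w} = RS"
    proof (intro equalityI subsetI)
      fix d assume d: "d \<in> {d \<in> codewords m x. bval d < bval w}"
      have "hd d = b"
      proof (rule ccontr)
        assume "hd d \<noteq> b"
        then have "bval w < bval d" using hd_less[of w d] w False dlen[of d] dne[of d] d lw by auto
        then show False using d by simp
      qed
      then show "d \<in> RS" using d unfolding RS_def by blast
    qed (auto simp: RS_def)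
    then have "2 * gpos m x w = Tn x u" using G RkS R by simp
    then have "real (gpos m x w) = (1/2) * real (Tn x u)" by linarith
    then show ?thesis using sumeq w False by simp
  next
    case True
    define PF where "PF = {d \<in> codewords m x. hd d = False}"
    have eq: "{d \<in> codewords m x. bval d < bval w} = RS \<union> PF"
    proof (intro equalityI subsetI)
      fix d assume d: "d \<in> {d \<in> codewords m x. bval d < bval w}"
      then show "d \<in> RS \<union> PF" unfolding RS_def PF_def using True by auto
    next
      fix d assume d: "d \<in> RS \<union> PF"
      then show "d \<in> {d \<in> codewords m x. bval d < bval w}" unfolding RS_def PF_def
        using hd_less[of d w] True w dlen[of d] dne[of d] lw by auto
    qed
    have fin: "finite RS" "finite PF" unfolding RS_def PF_def using finite_cw[of m x] by auto
    have "card {d \<in> codewords m x. bval d < bval w} = card RS + card PF"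
      unfolding eq using fin by (intro card_Un_disjoint) (auto simp: RS_def PF_def True)
    moreover have "2 * card PF = Ncount (int m) x"
      unfolding PF_def Ncount_def using card_cw_split[OF m1, of x False] assms(2) by simp
    ultimately have "2 * gpos m x w = Ncount (int m) x + Tn x u" using G RkS R by simp
    then have "real (2 * gpos m x w) = real (Ncount (int m) x + Tn x u)" by (simp only:)
    then have "real (gpos m x w) = (1/2) * (real (Ncount (int m) x) + real (Tn x u))" by simp
    then show ?thesis using sumeq w True by simp
  qed
qed

end
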